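(* Let $V$ be a finite connected graph and let $E_1,E_2,E_3\subseteq V$ be connected subgraphs such that every edge of $V$ lies in exactly two of $E_1,E_2,E_3$, and such that $E_1\cap E_2\cap E_3$ is a single vertex $w$. Then, after renumbering, $V$ has one of the following forms: (a) $E_1,E_2,E_3$ are all the single point $w$; (b) $E_1=\{w\}$ and $E_2=E_3=V$, and $V$ has at least one edge; (c) $V=E_1\cup E_2$ with $E_1\cap E_2=\{w\}$ (so $V=E_1\vee_wE_2$) and $E_3=V$, and each of $E_1,E_2,E_3$ has at least one edge; (d) $V=V_1\cup V_2\cup V_3$ for subgraphs $V_1,V_2,V_3$ any two of which meet exactly in $\{w\}$ (so $V=\bigvee_w V_i$), and $E_i=V_{i+1}\vee_w V_{i+2}$ (indices mod $3$), with each $E_i$ having at least one edge. *)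

theory Defs
  imports Main "HOL-Combinatorics.Permutations"
begin

text \<open>A finite (multi)graph is given by a vertex set Vs, an edge set Es and an
endpoint map ends assigning to every edge its set of one (loop) or two endpoints.\<close>

definition fin_graph :: "'v set \<Rightarrow> 'e set \<Rightarrow> ('e \<Rightarrow> 'v set) \<Rightarrow> bool" where
  "fin_graph Vs Es ends \<longleftrightarrow> finite Vs \<and> finite Es \<and>
     (\<forall>e\<in>Es. ends e \<subseteq> Vs \<and> 1 \<le> card (ends e) \<and> card (ends e) \<le> 2)"

definition is_subgraph :: "'v set \<Rightarrow> 'e set \<Rightarrow> ('e \<Rightarrow> 'v set) \<Rightarrow> 'v set \<Rightarrow> 'e set \<Rightarrow> bool" where
  "is_subgraph Vs Es ends SV SE \<longleftrightarrow> SV \<subseteq> Vs \<and> SE \<subseteq> Es \<and> (\<forall>e\<in>SE. ends e \<subseteq> SV)"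

definition adj_rel :: "('e \<Rightarrow> 'v set) \<Rightarrow> 'e set \<Rightarrow> ('v \<times> 'v) set" where
  "adj_rel ends SE = {(u, v). \<exists>e\<in>SE. ends e = {u, v}}"

definition connected_graph :: "('e \<Rightarrow> 'v set) \<Rightarrow> 'v set \<Rightarrow> 'e set \<Rightarrow> bool" where
  "connected_graph ends SV SE \<longleftrightarrow> SV \<noteq> {} \<and>
     (\<forall>u\<in>SV. \<forall>v\<in>SV. (u, v) \<in> (adj_rel ends SE)\<^sup>*)"

end

theory Submission
  imports Defs
begin


lemma less3: "(i::nat) < 3 \<longleftrightarrow> i = 0 \<or> i = 1 \<or> i = 2" by arith
lemma card3_two:
  "card {i::nat. i < 3 \<and> P i} = 2 \<longleftrightarrow>
     (P 0 \<and> P 1 \<and> \<not> P 2) \<or> (P 0 \<and> \<not> P 1 \<and> P 2) \<or> (\<not> P 0 \<and> P 1 \<and> P 2)"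
proof -
  have e: "{i::nat. i < 3 \<and> P i} = (if P 0 then {0} else {}) \<union> (if P 1 then {1} else {}) \<union> (if P 2 then {2} else {})"
  proof (rule set_eqI)
    fix x :: nat
    show "x \<in> {i::nat. i < 3 \<and> P i} \<longleftrightarrow> x \<in> (if P 0 then {0} else {}) \<union> (if P 1 then {1} else {}) \<union> (if P 2 then {2} else {})"
      using less3[of x] by (cases "x = 0"; cases "x = 1"; cases "x = 2") auto
  qed
  show ?thesis unfolding e by (cases "P 0"; cases "P 1"; cases "P 2") simp_all
qed

lemma all_less_3: "(\<forall>i<(3::nat). P i) \<longleftrightarrow> P 0 \<and> P 1 \<and> P 2"
  by (auto simp: less3)

lemma walk_first_edge:
  assumes "(v, w) \<in> (adj_rel ends S)\<^sup>*" "v \<noteq> w"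
  shows "\<exists>e\<in>S. v \<in> ends e"
proof -
  from assms obtain y where "(v, y) \<in> adj_rel ends S"
    by (metis converse_rtranclE)
  then show ?thesis by (auto simp: adj_rel_def)
qed

lemma no_edges_single:
  assumes "connected_graph ends SV {}" "w \<in> SV"
  shows "SV = {w}"
proof -
  have "adj_rel ends {} = {}" by (auto simp: adj_rel_def)
  then show ?thesis using assms by (auto simp: connected_graph_def)
qed

theorem lemma4p4:
  fixes Vs :: "'v set" and Es :: "'e set" and ends :: "'e \<Rightarrow> 'v set"
    and EV :: "nat \<Rightarrow> 'v set" and EE :: "nat \<Rightarrow> 'e set" and w :: 'v
  assumes graph: "fin_graph Vs Es ends"
    and conn: "connected_graph ends Vs Es"
    and sub: "\<And>i. i < 3 \<Longrightarrow> is_subgraph Vs Es ends (EV i) (EE i)"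
    and subconn: "\<And>i. i < 3 \<Longrightarrow> connected_graph ends (EV i) (EE i)"
    and two: "\<And>e. e \<in> Es \<Longrightarrow> card {i. i < 3 \<and> e \<in> EE i} = 2"
    and meetV: "EV 0 \<inter> EV 1 \<inter> EV 2 = {w}"
    and meetE: "EE 0 \<inter> EE 1 \<inter> EE 2 = {}"
  shows "\<exists>\<sigma>. \<sigma> permutes {0::nat, 1, 2} \<and>
    (let FV = EV \<circ> \<sigma>; FE = EE \<circ> \<sigma> in
      \<comment> \<open>(a)\<close>
      (\<forall>i<3. FV i = {w} \<and> FE i = {})
      \<comment> \<open>(b)\<close>
    \<or> (FV 0 = {w} \<and> FE 0 = {} \<and> FV 1 = Vs \<and> FE 1 = Es \<and> FV 2 = Vs \<and> FE 2 = Es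
        \<and> Es \<noteq> {})
      \<comment> \<open>(c)\<close>
    \<or> (Vs = FV 0 \<union> FV 1 \<and> Es = FE 0 \<union> FE 1 \<and> FV 0 \<inter> FV 1 = {w} \<and> FE 0 \<inter> FE 1 = {}
        \<and> FV 2 = Vs \<and> FE 2 = Es \<and> (\<forall>i<3. FE i \<noteq> {}))
      \<comment> \<open>(d)\<close>
    \<or> (\<exists>WV :: nat \<Rightarrow> 'v set. \<exists>WE :: nat \<Rightarrow> 'e set.
          (\<forall>i<3. is_subgraph Vs Es ends (WV i) (WE i))
        \<and> Vs = WV 0 \<union> WV 1 \<union> WV 2 \<and> Es = WE 0 \<union> WE 1 \<union> WE 2
        \<and> (\<forall>i<3. \<forall>j<3. i \<noteq> j \<longrightarrow> WV i \<inter> WV j = {w} \<and> WE i \<inter> WE j = {})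
        \<and> (\<forall>i<3. FV i = WV ((i + 1) mod 3) \<union> WV ((i + 2) mod 3)
                 \<and> FE i = WE ((i + 1) mod 3) \<union> WE ((i + 2) mod 3))
        \<and> (\<forall>i<3. FE i \<noteq> {})))"
  proof -
  have EEs: "\<And>i. i < 3 \<Longrightarrow> EE i \<subseteq> Es" and EVs: "\<And>i. i < 3 \<Longrightarrow> EV i \<subseteq> Vs"
    and endsE: "\<And>i e. i < 3 \<Longrightarrow> e \<in> EE i \<Longrightarrow> ends e \<subseteq> EV i"
    using sub by (auto simp: is_subgraph_def)
  have tw: "\<And>e. e \<in> Es \<Longrightarrow> (e \<in> EE 0 \<and> e \<in> EE 1 \<and> e \<notin> EE 2) \<or> (e \<in> EE 0 \<and> e \<notin> EE 1 \<and> e \<in> EE 2)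
       \<or> (e \<notin> EE 0 \<and> e \<in> EE 1 \<and> e \<in> EE 2)"
    using two card3_two by metis
  have w: "w \<in> EV 0" "w \<in> EV 1" "w \<in> EV 2" using meetV by auto
  have edge2: "\<And>e v. e \<in> Es \<Longrightarrow> v \<in> ends e \<Longrightarrow>
     (v \<in> EV 0 \<and> v \<in> EV 1) \<or> (v \<in> EV 0 \<and> v \<in> EV 2) \<or> (v \<in> EV 1 \<and> v \<in> EV 2)"
  proof -
    fix e v assume e: "e \<in> Es" and v: "v \<in> ends e"
    show "(v \<in> EV 0 \<and> v \<in> EV 1) \<or> (v \<in> EV 0 \<and> v \<in> EV 2) \<or> (v \<in> EV 1 \<and> v \<in> EV 2)"
      using tw[OF e] endsE[of 0 e] endsE[of 1 e] endsE[of 2 e] v by auto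
  qed
  have vs2: "\<And>v. v \<in> Vs \<Longrightarrow>
     (v \<in> EV 0 \<and> v \<in> EV 1) \<or> (v \<in> EV 0 \<and> v \<in> EV 2) \<or> (v \<in> EV 1 \<and> v \<in> EV 2)"
  proof -
    fix v assume v: "v \<in> Vs"
    show "(v \<in> EV 0 \<and> v \<in> EV 1) \<or> (v \<in> EV 0 \<and> v \<in> EV 2) \<or> (v \<in> EV 1 \<and> v \<in> EV 2)"
    proof (cases "v = w")
      case True then show ?thesis using w by auto
    next
      case False
      have "w \<in> Vs" using w EVs[of 0] by auto
      then have "(v, w) \<in> (adj_rel ends Es)\<^sup>*" using conn v by (auto simp: connected_graph_def)
      then obtain e where "e \<in> Es" "v \<in> ends e" using walk_first_edge False by metis
      then show ?thesis using edge2 by blast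
    qed
  qed
  have ev2: "\<And>v i. i < 3 \<Longrightarrow> v \<in> EV i \<Longrightarrow>
     (v \<in> EV 0 \<and> v \<in> EV 1) \<or> (v \<in> EV 0 \<and> v \<in> EV 2) \<or> (v \<in> EV 1 \<and> v \<in> EV 2)"
    using vs2 EVs by blast
  have caseb: "\<And>k. k < 3 \<Longrightarrow> EE k = {} \<Longrightarrow> Es \<noteq> {} \<Longrightarrow>
      EV k = {w} \<and> (\<forall>j<3. j \<noteq> k \<longrightarrow> EE j = Es \<and> EV j = Vs)"
  proof -
    fix k :: nat assume k: "k < 3" "EE k = {}" "Es \<noteq> {}"
    have "EV k = {w}" using no_edges_single[of ends "EV k" w] subconn[OF k(1)] k w
      by (auto simp: all_less_3 less3)
    moreover have "\<forall>j<3. j \<noteq> k \<longrightarrow> EE j = Es"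
      using k tw EEs by (auto simp: all_less_3 less3)
    moreover have "\<forall>j<3. j \<noteq> k \<longrightarrow> EV j = Vs"
    proof (intro allI impI)
      fix j :: nat assume j: "j < 3" "j \<noteq> k"
      have EEj: "EE j = Es" using calculation(2) j by auto
      show "EV j = Vs"
      proof
        show "EV j \<subseteq> Vs" using EVs j by auto
        show "Vs \<subseteq> EV j"
        proof
          fix v assume v: "v \<in> Vs"
          show "v \<in> EV j"
          proof (cases "v = w")
            case True then show ?thesis using w j by (auto simp: less3)
          next
            case False
            have "w \<in> Vs" using w EVs[of 0] by auto
            then have "(v, w) \<in> (adj_rel ends Es)\<^sup>*" using conn v by (auto simp: connected_graph_def)
            then obtain e where "e \<in> Es" "v \<in> ends e" using walk_first_edge False by metis
            then show ?thesis using endsE[of j e] EEj j by auto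
          qed
        qed
      qed
    qed
    ultimately show "EV k = {w} \<and> (\<forall>j<3. j \<noteq> k \<longrightarrow> EE j = Es \<and> EV j = Vs)" by blast
  qed
  have p0: "(id::nat\<Rightarrow>nat) permutes {0::nat, 1, 2}" by (rule permutes_id)
  have p1: "transpose (0::nat) 1 permutes {0::nat, 1, 2}" by (rule permutes_swap_id) auto
  have p2: "transpose (0::nat) 2 permutes {0::nat, 1, 2}" by (rule permutes_swap_id) auto
  show ?thesis
  proof (cases "Es = {}")
    case True
    have "EE i = {}" if "i < 3" for i using EEs[OF that] True by auto
    moreover have "EV i = {w}" if "i < 3" for i
      using no_edges_single[of ends "EV i" w] subconn[OF that] calculation[OF that] w that
      by (auto simp: less3)
    ultimately show ?thesis by (intro exI[of _ id] conjI p0) (simp add: Let_def)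
  next
    case Es: False
    show ?thesis
    proof (cases "EE 0 = {}")
      case True
      from caseb[OF _ True Es] have "EV 0 = {w}" "EE 1 = Es" "EV 1 = Vs" "EE 2 = Es" "EV 2 = Vs"
        by auto
      then show ?thesis using True Es by (intro exI[of _ id] conjI p0) (simp add: Let_def)
    next
      case n0: False
      show ?thesis
      proof (cases "EE 1 = {}")
        case True
        from caseb[OF _ True Es] have "EV 1 = {w}" "EE 0 = Es" "EV 0 = Vs" "EE 2 = Es" "EV 2 = Vs"
          by auto
        then show ?thesis using True Es
          by (intro exI[of _ "transpose 0 1"] conjI p1) (simp add: Let_def transpose_def)
      next
        case n1: False
        show ?thesis
        proof (cases "EE 2 = {}")
          case True
          from caseb[OF _ True Es] have "EV 2 = {w}" "EE 0 = Es" "EV 0 = Vs" "EE 1 = Es" "EV 1 = Vs"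
            by auto
          then show ?thesis using True Es
            by (intro exI[of _ "transpose 0 2"] conjI p2) (simp add: Let_def transpose_def)
        next
          case n2: False
          define WV where "WV i = EV ((i + 1) mod 3) \<inter> EV ((i + 2) mod 3)" for i
          define WE where "WE i = Es - EE i" for i
          have WV: "WV 0 = EV 1 \<inter> EV 2" "WV 1 = EV 2 \<inter> EV 0" "WV 2 = EV 0 \<inter> EV 1"
            by (simp_all add: WV_def numeral_2_eq_2)
          have d: "(\<forall>i<3. is_subgraph Vs Es ends (WV i) (WE i))
            \<and> Vs = WV 0 \<union> WV 1 \<union> WV 2 \<and> Es = WE 0 \<union> WE 1 \<union> WE 2
            \<and> (\<forall>i<3. \<forall>j<3. i \<noteq> j \<longrightarrow> WV i \<inter> WV j = {w} \<and> WE i \<inter> WE j = {})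
            \<and> (\<forall>i<3. EV i = WV ((i + 1) mod 3) \<union> WV ((i + 2) mod 3)
                     \<and> EE i = WE ((i + 1) mod 3) \<union> WE ((i + 2) mod 3))
            \<and> (\<forall>i<3. EE i \<noteq> {})"
          proof (intro conjI)
            show "\<forall>i<3. is_subgraph Vs Es ends (WV i) (WE i)"
            proof -
              have "is_subgraph Vs Es ends (WV 0) (WE 0)" unfolding is_subgraph_def WV WE_def
              proof (intro conjI ballI)
                show "EV 1 \<inter> EV 2 \<subseteq> Vs" using EVs[of 1] by auto
                show "Es - EE 0 \<subseteq> Es" by auto
                fix e assume "e \<in> Es - EE 0"
                then have "e \<in> EE 1" "e \<in> EE 2" using tw[of e] by auto
                then show "ends e \<subseteq> EV 1 \<inter> EV 2" using endsE[of 1 e] endsE[of 2 e] by auto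
              qed
              moreover
              have "is_subgraph Vs Es ends (WV 1) (WE 1)" unfolding is_subgraph_def WV WE_def
              proof (intro conjI ballI)
                show "EV 2 \<inter> EV 0 \<subseteq> Vs" using EVs[of 2] by auto
                show "Es - EE 1 \<subseteq> Es" by auto
                fix e assume "e \<in> Es - EE 1"
                then have "e \<in> EE 2" "e \<in> EE 0" using tw[of e] by auto
                then show "ends e \<subseteq> EV 2 \<inter> EV 0" using endsE[of 2 e] endsE[of 0 e] by auto
              qed
              moreover
              have "is_subgraph Vs Es ends (WV 2) (WE 2)" unfolding is_subgraph_def WV WE_def
              proof (intro conjI ballI)
                show "EV 0 \<inter> EV 1 \<subseteq> Vs" using EVs[of 0] by auto
                show "Es - EE 2 \<subseteq> Es" by auto
                fix e assume "e \<in> Es - EE 2"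
                then have "e \<in> EE 0" "e \<in> EE 1" using tw[of e] by auto
                then show "ends e \<subseteq> EV 0 \<inter> EV 1" using endsE[of 0 e] endsE[of 1 e] by auto
              qed
              ultimately show ?thesis unfolding all_less_3 by blast
            qed
            show "Vs = WV 0 \<union> WV 1 \<union> WV 2"
            proof (rule equalityI)
              show "Vs \<subseteq> WV 0 \<union> WV 1 \<union> WV 2" unfolding WV using vs2 by blast
              show "WV 0 \<union> WV 1 \<union> WV 2 \<subseteq> Vs" unfolding WV using EVs[of 0] EVs[of 1] EVs[of 2] by auto
            qed
            show "Es = WE 0 \<union> WE 1 \<union> WE 2"
              unfolding WE_def using tw by blast
            show "\<forall>i<3. \<forall>j<3. i \<noteq> j \<longrightarrow> WV i \<inter> WV j = {w} \<and> WE i \<inter> WE j = {}"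
            proof -
              have a: "WV 0 \<inter> WV 1 = {w}" "WV 1 \<inter> WV 0 = {w}" "WV 0 \<inter> WV 2 = {w}"
                "WV 2 \<inter> WV 0 = {w}" "WV 1 \<inter> WV 2 = {w}" "WV 2 \<inter> WV 1 = {w}"
                unfolding WV using meetV by blast+
              have b: "WE 0 \<inter> WE 1 = {}" "WE 1 \<inter> WE 0 = {}" "WE 0 \<inter> WE 2 = {}"
                "WE 2 \<inter> WE 0 = {}" "WE 1 \<inter> WE 2 = {}" "WE 2 \<inter> WE 1 = {}"
                unfolding WE_def using tw by blast+
              show ?thesis unfolding all_less_3 using a b by simp
            qed
            show "\<forall>i<3. EV i = WV ((i + 1) mod 3) \<union> WV ((i + 2) mod 3)
                     \<and> EE i = WE ((i + 1) mod 3) \<union> WE ((i + 2) mod 3)"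
            proof -
              have m: "(0 + 1) mod 3 = (1::nat)" "(0 + 2) mod 3 = (2::nat)" "(1 + 1) mod 3 = (2::nat)"
                "(1 + 2) mod 3 = (0::nat)" "(2 + 1) mod 3 = (0::nat)" "(2 + 2) mod 3 = (1::nat)" by simp_all
              have a: "EV 0 = WV 1 \<union> WV 2" "EV 1 = WV 2 \<union> WV 0" "EV 2 = WV 0 \<union> WV 1"
              proof -
                show "EV 0 = WV 1 \<union> WV 2"
                proof (rule equalityI)
                  show "WV 1 \<union> WV 2 \<subseteq> EV 0" unfolding WV by auto
                  show "EV 0 \<subseteq> WV 1 \<union> WV 2"
                  proof
                    fix v assume "v \<in> EV 0"
                    then show "v \<in> WV 1 \<union> WV 2" unfolding WV using ev2[of 0 v] by auto
                  qed
                qed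
                show "EV 1 = WV 2 \<union> WV 0"
                proof (rule equalityI)
                  show "WV 2 \<union> WV 0 \<subseteq> EV 1" unfolding WV by auto
                  show "EV 1 \<subseteq> WV 2 \<union> WV 0"
                  proof
                    fix v assume "v \<in> EV 1"
                    then show "v \<in> WV 2 \<union> WV 0" unfolding WV using ev2[of 1 v] by auto
                  qed
                qed
                show "EV 2 = WV 0 \<union> WV 1"
                proof (rule equalityI)
                  show "WV 0 \<union> WV 1 \<subseteq> EV 2" unfolding WV by auto
                  show "EV 2 \<subseteq> WV 0 \<union> WV 1"
                  proof
                    fix v assume "v \<in> EV 2"
                    then show "v \<in> WV 0 \<union> WV 1" unfolding WV using ev2[of 2 v] by auto
                  qed
                qed
              qed
              have b: "EE 0 = WE 1 \<union> WE 2" "EE 1 = WE 2 \<union> WE 0" "EE 2 = WE 0 \<union> WE 1"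
                unfolding WE_def using tw EEs[of 0, simplified] EEs[of 1, simplified] EEs[of 2, simplified]
                by auto
              show ?thesis unfolding all_less_3 m using a b by simp
            qed
            show "\<forall>i<3. EE i \<noteq> {}" unfolding all_less_3 using n0 n1 n2 by simp
          qed
          show ?thesis
            apply (intro exI[of _ id] conjI p0)
            apply (simp only: Let_def comp_id)
            apply (intro disjI2 exI[of _ WV] exI[of _ WE])
            by (rule d)
        qed
      qed
    qed
  qed
qed

end
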